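(* Let $G$ be a flattened grammar and $\mathrm{CPS}(G)$ its CPS transformation (with respect to an arbitrary fixed choice of CPS-triggering nonterminals). Then: (1) For every symbol $X$ of $G$ and every terminal string $\lambda\in\Sigma^*$, if $X\Rightarrow^*\lambda$ in $G$ in $n$ steps, then $\hat X\Rightarrow^*\lambda\,\tau_X$ in $\mathrm{CPS}(G)$ in $n$ steps. (2) For every dotted production $\Pi = X\to\alpha_1\cdots\alpha_{i-1}\cdot\alpha_i\cdots\alpha_r$ of $G$ and every $\lambda\in\Sigma^*$, if $\alpha_i\cdots\alpha_r\Rightarrow^*\lambda$ in $G$ in $n$ steps, then $\tau_\Pi\Rightarrow^*\lambda\,\tau_X$ in $\mathrm{CPS}(G)$ in $n$ steps.
   Context: BNF grammars and flattening. A BNF grammar over terminals $\Sigma$ is a list of rules $X\to e$, where $X$ is a nonterminal (called top-level) and $e$ is an expression: a single symbol; a concatenation $e_1\cdots e_n$ ($n\ge 0$, the case $n=0$ being $\varepsilon$); an alternation $e_1\mid\cdots\mid e_n$; an optional $e_1?$; or a repetition $e_1^*$. The procedure $\mathrm{Flatten}(X,e)$ emits context-free productions: (i) if $e=\alpha$ is a single symbol, emit $X\to\alpha$; (ii) if $e=e_1\cdots e_n$, for each $i$ let $\alpha_i=e_i$ if $e_i$ is a single symbol, and otherwise let $\alpha_i$ be a fresh nonterminal and call $\mathrm{Flatten}(\alpha_i,e_i)$; emit $X\to\alpha_1\cdots\alpha_n$; (iii) if $e=e_1\mid\cdots\mid e_n$, call $\mathrm{Flatten}(X,e_i)$ for each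 $i$; (iv) if $e=e_1?$, call $\mathrm{Flatten}(X,e_1\mid\varepsilon)$; (v) if $e=e_1^*$, let $\alpha$ be fresh, call $\mathrm{Flatten}(\alpha,e_1)$ and emit $X\to\alpha X$ and $X\to\varepsilon$. The flattened grammar $G$ consists of all productions emitted by $\mathrm{Flatten}(X,e)$ over all rules $X\to e$; its start symbol $S$ is a top-level nonterminal. CPS transformation. A nonterminal is CPS-eligible if it was created as a fresh symbol during flattening. Fix an arbitrary subset of the CPS-eligible nonterminals, called CPS-triggering (terminals and top-level nonterminals are never CPS-triggering). For every nonterminal $Y$ let $\hat Y$ be a new symbol; for a terminal $\sigma$ set $\hat\sigma=\sigma$. Define mutually recursive procedures. $\mathrm{CPSProd}(X\to\alpha_1\cdots\alpha_i\cdot\alpha_{i+1}\cdots\alpha_r,\ \tau)$, where $\tau$ is a string of symbols: if $i=0$, add the production $\hat X\to\tau$ to $\mathrm{CPS}(G)$; if $i>0$ and $\alpha_i$ is not CPS-triggering, call $\mathrm{CPSProd}(X\to\alpha_1\cdots\alpha_{i-1}\cdot\alpha_i\cdots\alpha_r,\ \hat\alpha_i\tau)$; if $i>0$, $\alpha_i$ is CPS-triggering, $i=r$ and $X=\alpha_r$ (i.e. the dotted production has the form $\alpha\to\gamma\alpha\,\cdot$), call $\mathrm{CPSProd}(X\to\alpha_1\cdots\alpha_{r-1}\cdot\alpha_r,\ \hat\alpha_r)$; otherwise ($\alpha_i$ CPS-triggering, not of that form) call $\mathrm{CPSSym}(\alpha_i,\tau)$ and then $\mathrm{CPSProd}(X\to\alpha_1\cdots\alpha_{i-1}\cdot\alpha_i\cdots\alpha_r,\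 \hat\alpha_i)$. $\mathrm{CPSSym}(X,\tau)$: for each production $X\to\eta$ of $G$, call $\mathrm{CPSProd}(X\to\eta\,\cdot,\ \tau)$. The grammar $\mathrm{CPS}(G)$ consists of all productions added when $\mathrm{CPSSym}(X,\varepsilon)$ is called for every non-CPS-triggering nonterminal $X$; its start symbol is $\hat S$. Tail contexts. During this transformation $\mathrm{CPSSym}(X,\cdot)$ is invoked exactly once for each nonterminal $X$, and $\mathrm{CPSProd}(\Pi,\cdot)$ exactly once for each dotted production $\Pi$ of $G$. For a nonterminal $X$, $\tau_X$ denotes the second argument of that invocation of $\mathrm{CPSSym}(X,\cdot)$; for a terminal $X$, $\tau_X=\varepsilon$. For a dotted production $\Pi$, $\tau_\Pi$ is the second argument of the invocation $\mathrm{CPSProd}(\Pi,\cdot)$. "$A\Rightarrow^* w$ in $n$ steps" means there is a derivation from $A$ to $w$ using exactly $n$ production applications. *)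

theory Defs
  imports Main
begin

text \<open>A fresh nonterminal is named by the index of the BNF rule in which
  it was created and by the tree position (path) of the subexpression it stands for;
  this guarantees freshness.\<close>

datatype 'n nt = Top 'n | Fresh nat "nat list"

datatype ('t, 'n) sym = T 't | N "'n nt"

datatype ('t, 'n) csym = CT 't | Hat "'n nt"

fun hat :: "('t, 'n) sym \<Rightarrow> ('t, 'n) csym" where
  "hat (T a) = CT a"
| "hat (N Y) = Hat Y"

datatype ('t, 'n) rexp =
    RT 't | RN 'n
  | Conc "('t, 'n) rexp list"
  | Alt "('t, 'n) rexp list"
  | Opt "('t, 'n) rexp"
  | Star "('t, 'n) rexp"

type_synonym ('t, 'n) bnf_grammar = "('n \<times> ('t, 'n) rexp) list"

type_synonym 's prods = "('s \<times> 's list) set"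

fun atom :: "('t, 'n) rexp \<Rightarrow> ('t, 'n) sym option" where
  "atom (RT a) = Some (T a)"
| "atom (RN n) = Some (N (Top n))"
| "atom _ = None"

text \<open>Symbols \<open>\<alpha>_i\<close> of the concatenation production (0-based index \<open>i\<close>).\<close>
definition concSyms :: "nat \<Rightarrow> nat list \<Rightarrow> ('t, 'n) rexp list \<Rightarrow> ('t, 'n) sym list" where
  "concSyms k p es = map (\<lambda>(i, e). case atom e of Some s \<Rightarrow> s | None \<Rightarrow> N (Fresh k (p @ [i])))
                         (zip [0..<length es] es)"

text \<open>\<open>flatten k X p e\<close> = Flatten(X,e), where \<open>k\<close> is the rule index and \<open>p\<close> the
  position of \<open>e\<close> in the rule's expression tree (used to generate fresh names).\<close>
fun flatten :: "nat \<Rightarrow> 'n nt \<Rightarrow> nat list \<Rightarrow> ('t, 'n) rexp \<Rightarrow> ('t, 'n) sym prods"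
and flattenConc :: "nat \<Rightarrow> nat list \<Rightarrow> nat \<Rightarrow> ('t, 'n) rexp list \<Rightarrow> ('t, 'n) sym prods"
and flattenAlt :: "nat \<Rightarrow> 'n nt \<Rightarrow> nat list \<Rightarrow> nat \<Rightarrow> ('t, 'n) rexp list \<Rightarrow> ('t, 'n) sym prods"
where
  "flatten k X p (RT a) = {(N X, [T a])}"
| "flatten k X p (RN n) = {(N X, [N (Top n)])}"
| "flatten k X p (Conc es) = {(N X, concSyms k p es)} \<union> flattenConc k p 0 es"
| "flatten k X p (Alt es) = flattenAlt k X p 0 es"
| "flatten k X p (Opt e) = flatten k X (p @ [0]) e \<union> {(N X, [])}"
| "flatten k X p (Star e) =
     flatten k (Fresh k (p @ [0])) (p @ [0]) e \<union> {(N X, [N (Fresh k (p @ [0])), N X]), (N X, [])}"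
| "flattenConc k p j [] = {}"
| "flattenConc k p j (e # es) =
     (case atom e of Some _ \<Rightarrow> {} | None \<Rightarrow> flatten k (Fresh k (p @ [j])) (p @ [j]) e)
     \<union> flattenConc k p (Suc j) es"
| "flattenAlt k X p j [] = {}"
| "flattenAlt k X p j (e # es) = flatten k X (p @ [j]) e \<union> flattenAlt k X p (Suc j) es"

text \<open>Note: \<open>Opt e\<close> is Flatten(X, e | \<open>\<epsilon>\<close>) written out (the \<open>\<epsilon>\<close> branch emits \<open>X \<rightarrow> \<epsilon>\<close>).\<close>

definition flattenGrammar :: "('t, 'n) bnf_grammar \<Rightarrow> ('t, 'n) sym prods" where
  "flattenGrammar rules = (\<Union>k<length rules. flatten k (Top (fst (rules ! k))) [] (snd (rules ! k)))"

definition syms :: "'s prods \<Rightarrow> 's set" where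
  "syms P = {s. \<exists>A \<beta>. (A, \<beta>) \<in> P \<and> (s = A \<or> s \<in> set \<beta>)}"

definition cps_eligible :: "('t, 'n) sym prods \<Rightarrow> 'n nt \<Rightarrow> bool" where
  "cps_eligible G Y \<longleftrightarrow> (\<exists>k p. Y = Fresh k p) \<and> N Y \<in> syms G"

definition step :: "'s prods \<Rightarrow> 's list \<Rightarrow> 's list \<Rightarrow> bool" where
  "step P u v \<longleftrightarrow> (\<exists>l r A \<beta>. (A, \<beta>) \<in> P \<and> u = l @ A # r \<and> v = l @ \<beta> @ r)"

definition derivesN :: "'s prods \<Rightarrow> nat \<Rightarrow> 's list \<Rightarrow> 's list \<Rightarrow> bool" where
  "derivesN P n u v \<longleftrightarrow> (step P ^^ n) u v"

text \<open>Invocations: \<open>SymCall X\<close> is CPSSym(X,_) and \<open>ProdCall X \<eta> j\<close> is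
  CPSProd(\<open>X \<rightarrow> \<eta>\<close> with the dot after the first \<open>j\<close> symbols, _).\<close>
datatype ('t, 'n) call = SymCall "'n nt" | ProdCall "'n nt" "('t, 'n) sym list" nat

definition trig :: "'n nt set \<Rightarrow> ('t, 'n) sym \<Rightarrow> bool" where
  "trig Trig s \<longleftrightarrow> (\<exists>Y. s = N Y \<and> Y \<in> Trig)"

inductive cps_call :: "('t, 'n) sym prods \<Rightarrow> 'n nt set \<Rightarrow> ('t, 'n) call \<Rightarrow> ('t, 'n) csym list \<Rightarrow> bool"
  for G Trig where
  top: "N Y \<in> syms G \<Longrightarrow> Y \<notin> Trig \<Longrightarrow> cps_call G Trig (SymCall Y) []"
| sym: "cps_call G Trig (SymCall X) \<tau> \<Longrightarrow> (N X, \<eta>) \<in> G \<Longrightarrow>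
        cps_call G Trig (ProdCall X \<eta> (length \<eta>)) \<tau>"
| nontrig: "cps_call G Trig (ProdCall X \<eta> (Suc j)) \<tau> \<Longrightarrow> Suc j \<le> length \<eta> \<Longrightarrow>
        \<not> trig Trig (\<eta> ! j) \<Longrightarrow>
        cps_call G Trig (ProdCall X \<eta> j) (hat (\<eta> ! j) # \<tau>)"
| selfloop: "cps_call G Trig (ProdCall X \<eta> (Suc j)) \<tau> \<Longrightarrow> Suc j = length \<eta> \<Longrightarrow>
        \<eta> ! j = N X \<Longrightarrow> X \<in> Trig \<Longrightarrow>
        cps_call G Trig (ProdCall X \<eta> j) [Hat X]"
| trig_sym: "cps_call G Trig (ProdCall X \<eta> (Suc j)) \<tau> \<Longrightarrow> Suc j \<le> length \<eta> \<Longrightarrow>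
        \<eta> ! j = N Y \<Longrightarrow> Y \<in> Trig \<Longrightarrow> \<not> (Suc j = length \<eta> \<and> Y = X) \<Longrightarrow>
        cps_call G Trig (SymCall Y) \<tau>"
| trig_prod: "cps_call G Trig (ProdCall X \<eta> (Suc j)) \<tau> \<Longrightarrow> Suc j \<le> length \<eta> \<Longrightarrow>
        \<eta> ! j = N Y \<Longrightarrow> Y \<in> Trig \<Longrightarrow> \<not> (Suc j = length \<eta> \<and> Y = X) \<Longrightarrow>
        cps_call G Trig (ProdCall X \<eta> j) [Hat Y]"

text \<open>Productions added: when CPSProd is called with the dot at position 0.\<close>
definition cpsGrammar :: "('t, 'n) sym prods \<Rightarrow> 'n nt set \<Rightarrow> ('t, 'n) csym prods" where
  "cpsGrammar G Trig = {(Hat X, \<tau>) | X \<eta> \<tau>. cps_call G Trig (ProdCall X \<eta> 0) \<tau>}"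

definition tauSym :: "('t, 'n) sym prods \<Rightarrow> 'n nt set \<Rightarrow> ('t, 'n) sym \<Rightarrow> ('t, 'n) csym list" where
  "tauSym G Trig X = (case X of T _ \<Rightarrow> [] | N Y \<Rightarrow> (THE \<tau>. cps_call G Trig (SymCall Y) \<tau>))"

definition tauProd :: "('t, 'n) sym prods \<Rightarrow> 'n nt set \<Rightarrow> 'n nt \<Rightarrow> ('t, 'n) sym list \<Rightarrow> nat
    \<Rightarrow> ('t, 'n) csym list" where
  "tauProd G Trig X \<eta> j = (THE \<tau>. cps_call G Trig (ProdCall X \<eta> j) \<tau>)"

end

theory Submission
  imports Defs
begin


lemma dN0[simp]: "derivesN P 0 u v \<longleftrightarrow> u = v"
  by (simp add: derivesN_def)

lemma dNSuc: "derivesN P (Suc n) u v \<longleftrightarrow> (\<exists>x. step P u x \<and> derivesN P n x v)"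
  unfolding derivesN_def by (meson relpowp_Suc_D2 relpowp_Suc_I2)

lemma step_ctx: "step P u v \<Longrightarrow> step P (l @ u @ r) (l @ v @ r)"
  unfolding step_def by (metis append.assoc append_Cons)

lemma dN_ctx: "derivesN P n u v \<Longrightarrow> derivesN P n (l @ u @ r) (l @ v @ r)"
proof (induction n arbitrary: u)
  case 0 then show ?case by simp
next
  case (Suc n)
  then obtain x where "step P u x" "derivesN P n x v" by (auto simp: dNSuc)
  then show ?case using Suc.IH step_ctx by (fastforce simp: dNSuc)
qed

lemma dN_trans: "derivesN P m u v \<Longrightarrow> derivesN P n v w \<Longrightarrow> derivesN P (m + n) u w"
  unfolding derivesN_def relpowp_add by auto

lemma dN_append: "derivesN P m u u' \<Longrightarrow> derivesN P n v v' \<Longrightarrow> derivesN P (m + n) (u @ v) (u' @ v')"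
proof -
  assume a: "derivesN P m u u'" "derivesN P n v v'"
  have "derivesN P m ([] @ u @ v) ([] @ u' @ v)" using dN_ctx[OF a(1)] .
  moreover have "derivesN P n (u' @ v @ []) (u' @ v' @ [])" using dN_ctx[OF a(2)] .
  ultimately show ?thesis using dN_trans by fastforce
qed

lemma dN_split: "derivesN P n (u @ v) z \<Longrightarrow>
  \<exists>n1 n2 z1 z2. n = n1 + n2 \<and> z = z1 @ z2 \<and> derivesN P n1 u z1 \<and> derivesN P n2 v z2"
proof (induction n arbitrary: u v)
  case 0 then show ?case by fastforce
next
  case (Suc n)
  then obtain x where st: "step P (u @ v) x" and d: "derivesN P n x z" by (auto simp: dNSuc)
  then obtain l r A \<beta> where p: "(A, \<beta>) \<in> P" and e: "u @ v = l @ A # r" and x: "x = l @ \<beta> @ r"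
    unfolding step_def by blast
  from e obtain us where "(u = l @ us \<and> us @ v = A # r) \<or> (u @ us = l \<and> v = us @ A # r)"
    by (auto simp: append_eq_append_conv2)
  then show ?case
  proof
    assume h: "u = l @ us \<and> us @ v = A # r"
    show ?thesis
    proof (cases us)
      case Nil
      with h have v: "v = A # r" and u: "u = l" by auto
      have "derivesN P n (u @ (\<beta> @ r)) z" using d x u by simp
      from Suc.IH[OF this] obtain n1 n2 z1 z2 where "n = n1 + n2" "z = z1 @ z2"
        "derivesN P n1 u z1" "derivesN P n2 (\<beta> @ r) z2" by blast
      moreover have "step P v (\<beta> @ r)" using p v unfolding step_def by (metis append_Nil)
      ultimately show ?thesis by (metis add_Suc_right dNSuc)
    next
      case (Cons a us')
      with h have u: "u = l @ A # us'" and r: "r = us' @ v" by auto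
      have "derivesN P n ((l @ \<beta> @ us') @ v) z" using d x r by simp
      from Suc.IH[OF this] obtain n1 n2 z1 z2 where "n = n1 + n2" "z = z1 @ z2"
        "derivesN P n1 (l @ \<beta> @ us') z1" "derivesN P n2 v z2" by blast
      moreover have "step P u (l @ \<beta> @ us')" using p u unfolding step_def by blast
      ultimately show ?thesis by (metis add_Suc dNSuc)
    qed
  next
    assume h: "u @ us = l \<and> v = us @ A # r"
    have "derivesN P n (u @ (us @ \<beta> @ r)) z" using d x h by auto
    from Suc.IH[OF this] obtain n1 n2 z1 z2 where "n = n1 + n2" "z = z1 @ z2"
      "derivesN P n1 u z1" "derivesN P n2 (us @ \<beta> @ r) z2" by blast
    moreover have "step P v (us @ \<beta> @ r)" using p h unfolding step_def by blast
    ultimately show ?thesis by (metis add_Suc_right dNSuc)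
  qed
qed

lemma dN_Nil: "derivesN P n [] z \<Longrightarrow> n = 0 \<and> z = []"
  by (cases n) (auto simp: dNSuc step_def)

lemma step_single: "step P [A] x \<Longrightarrow> (A, x) \<in> P"
  unfolding step_def by (auto simp: Cons_eq_append_conv)

lemma dN_noLHS: "(\<forall>\<beta>. (a, \<beta>) \<notin> P) \<Longrightarrow> derivesN P n [a] z \<Longrightarrow> n = 0 \<and> z = [a]"
  by (cases n) (auto simp: dNSuc dest: step_single)



fun isFresh :: "'n nt \<Rightarrow> bool" where
  "isFresh (Fresh _ _) = True" | "isFresh (Top _) = False"

fun sz :: "'n nt \<Rightarrow> nat" where
  "sz (Top _) = 0" | "sz (Fresh _ q) = Suc (length q)"

definition occ :: "('t,'n) sym prods \<Rightarrow> 'n nt \<Rightarrow> 'n nt \<Rightarrow> ('t,'n) sym list \<Rightarrow> nat \<Rightarrow> bool" where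
  "occ P Y A \<eta> j \<longleftrightarrow> (N A, \<eta>) \<in> P \<and> j < length \<eta> \<and> \<eta> ! j = N Y \<and> isFresh Y
     \<and> \<not> (Suc j = length \<eta> \<and> Y = A)"

definition func :: "('t,'n) sym prods \<Rightarrow> bool" where
  "func P \<longleftrightarrow> (\<forall>Y A \<eta> j A' \<eta>' j'. occ P Y A \<eta> j \<longrightarrow> occ P Y A' \<eta>' j' \<longrightarrow> A = A' \<and> \<eta> = \<eta>' \<and> j = j')"

lemma occ_Un[simp]: "occ (P \<union> Q) Y A \<eta> j \<longleftrightarrow> occ P Y A \<eta> j \<or> occ Q Y A \<eta> j"
  unfolding occ_def by auto

lemma occ_empty[simp]: "\<not> occ {} Y A \<eta> j"
  unfolding occ_def by auto

lemma occ_mono: "occ P Y A \<eta> j \<Longrightarrow> P \<subseteq> Q \<Longrightarrow> occ Q Y A \<eta> j"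
  unfolding occ_def by auto

lemma func_Un: "func P \<Longrightarrow> func Q \<Longrightarrow> (\<And>Y A \<eta> j A' \<eta>' j'. occ P Y A \<eta> j \<Longrightarrow> occ Q Y A' \<eta>' j' \<Longrightarrow> False)
  \<Longrightarrow> func (P \<union> Q)"
  unfolding func_def by (metis occ_Un)

lemma func_empty[simp]: "func {}" unfolding func_def by simp

lemma length_concSyms[simp]: "length (concSyms k p es) = length es"
  by (simp add: concSyms_def)

lemma nth_concSyms: "i < length es \<Longrightarrow>
  concSyms k p es ! i = (case atom (es!i) of Some s \<Rightarrow> s | None \<Rightarrow> N (Fresh k (p @ [i])))"
  by (simp add: concSyms_def)

lemma atom_N: "atom e = Some (N Y) \<Longrightarrow> \<not> isFresh Y"
  by (cases e) auto

lemma concSyms_fresh: "i < length es \<Longrightarrow> concSyms k p es ! i = N Y \<Longrightarrow> isFresh Y \<Longrightarrow>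
   Y = Fresh k (p @ [i]) \<and> atom (es!i) = None"
  by (auto simp: nth_concSyms split: option.splits dest: atom_N)

lemma occ_single: "occ {(N X, \<eta>)} Y A \<eta>' j \<longleftrightarrow> A = X \<and> \<eta>' = \<eta> \<and> j < length \<eta> \<and> \<eta> ! j = N Y \<and> isFresh Y
     \<and> \<not> (Suc j = length \<eta> \<and> Y = X)"
  unfolding occ_def by auto

lemma occ_insert[simp]: "occ (insert (N X, \<eta>) P) Y A \<eta>' j \<longleftrightarrow> (A = X \<and> \<eta>' = \<eta> \<and> j < length \<eta> \<and> \<eta> ! j = N Y \<and> isFresh Y
     \<and> \<not> (Suc j = length \<eta> \<and> Y = X)) \<or> occ P Y A \<eta>' j"
  unfolding occ_def by auto

lemma flat_func:
  fixes e :: "('t,'n) rexp" and es :: "('t,'n) rexp list"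
  shows
 "func (flatten k X p e) \<and> (\<forall>Y A \<eta> j. occ (flatten k X p e) Y A \<eta> j \<longrightarrow> (\<exists>q. Y = Fresh k (p@q) \<and> q \<noteq> []))"
 "func (flattenConc k p j es) \<and> (\<forall>Y A \<eta> i. occ (flattenConc k p j es) Y A \<eta> i \<longrightarrow> (\<exists>i' q. j \<le> i' \<and> Y = Fresh k (p@i'#q) \<and> q \<noteq> []))"
 "func (flattenAlt k X p j es) \<and> (\<forall>Y A \<eta> i. occ (flattenAlt k X p j es) Y A \<eta> i \<longrightarrow> (\<exists>i' q. j \<le> i' \<and> Y = Fresh k (p@i'#q)))"
proof (induction k X p e and k p j es and k X p j es rule: flatten_flattenConc_flattenAlt.induct)
  case (1 k X p a)
  have "\<not> occ (flatten k X p (RT a)) Y A \<eta> j" for Y A \<eta> j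
    by (cases j) (auto simp add: occ_single)
  then show ?case unfolding func_def by blast
next
  case (2 k X p n)
  have "\<not> occ (flatten k X p (RN n)) Y A \<eta> j" for Y A \<eta> j
    by (auto simp add: occ_single)
  then show ?case unfolding func_def by blast
next
  case (3 k X p es)
  have n1: "occ {(N X, concSyms k p es)} Y A \<eta> j \<Longrightarrow> Y = Fresh k (p @ [j]) \<and> A = X \<and> \<eta> = concSyms k p es" for Y A \<eta> j
  proof -
    assume "occ {(N X, concSyms k p es)} Y A \<eta> j"
    then have h: "A = X" "\<eta> = concSyms k p es" "j < length es" "concSyms k p es ! j = N Y" "isFresh Y"
      by (simp_all add: occ_single)
    from concSyms_fresh[OF h(3,4,5)] h(1,2) show ?thesis by simp
  qed
  have f1: "func {(N X, concSyms k p es)}"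
    unfolding func_def
  proof (intro allI impI)
    fix Y A \<eta> j A' \<eta>' j'
    assume a: "occ {(N X, concSyms k p es)} Y A \<eta> j" "occ {(N X, concSyms k p es)} Y A' \<eta>' j'"
    from n1[OF a(1)] n1[OF a(2)] show "A = A' \<and> \<eta> = \<eta>' \<and> j = j'" by simp
  qed
  have d: "False" if "occ {(N X, concSyms k p es)} Y A \<eta> j" "occ (flattenConc k p 0 es) Y A' \<eta>' j'" for Y A \<eta> j A' \<eta>' j'
  proof -
    from 3 that(2) obtain i' q where "Y = Fresh k (p @ i' # q)" "q \<noteq> []" by blast
    with n1[OF that(1)] show False by simp
  qed
  have "func (flatten k X p (Conc es))"
  proof -
    have "func ({(N X, concSyms k p es)} \<union> flattenConc k p 0 es)"
      by (rule func_Un[OF f1 _ d]) (use 3 in blast)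
    then show ?thesis by simp
  qed
  moreover have "\<exists>q. Y = Fresh k (p @ q) \<and> q \<noteq> []" if "occ (flatten k X p (Conc es)) Y A \<eta> j" for Y A \<eta> j
  proof -
    have "occ {(N X, concSyms k p es)} Y A \<eta> j \<or> occ (flattenConc k p 0 es) Y A \<eta> j" using that by simp
    then show ?thesis
    proof
      assume "occ {(N X, concSyms k p es)} Y A \<eta> j"
      from n1[OF this] show ?thesis by blast
    next
      assume "occ (flattenConc k p 0 es) Y A \<eta> j"
      with 3 obtain i' q where "Y = Fresh k (p @ i' # q)" by blast
      then show ?thesis by blast
    qed
  qed
  ultimately show ?case by blast
next
  case (4 k X p es)
  have "\<exists>q. Y = Fresh k (p @ q) \<and> q \<noteq> []" if "occ (flatten k X p (Alt es)) Y A \<eta> j" for Y A \<eta> j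
  proof -
    from 4 that have "occ (flattenAlt k X p 0 es) Y A \<eta> j" by simp
    with 4 obtain i' q where "Y = Fresh k (p @ i' # q)" by blast
    then show ?thesis by blast
  qed
  with 4 show ?case by simp
next
  case (5 k X p e)
  have e: "\<not> occ {(N X, [])} Y A \<eta> j" for Y A \<eta> j by (simp add: occ_single)
  have "func (flatten k X (p @ [0]) e \<union> {(N X, [])})"
    by (rule func_Un) (use 5 e in \<open>auto simp: func_def\<close>)
  then have "func (flatten k X p (Opt e))" by simp
  moreover have "\<exists>q. Y = Fresh k (p @ q) \<and> q \<noteq> []" if "occ (flatten k X p (Opt e)) Y A \<eta> j" for Y A \<eta> j
  proof -
    from that e have "occ (flatten k X (p @ [0]) e) Y A \<eta> j" by simp
    with 5 obtain q where "Y = Fresh k ((p @ [0]) @ q)" by blast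
    then show ?thesis by (intro exI[of _ "0 # q"]) simp
  qed
  ultimately show ?case by blast
next
  case (6 k X p e)
  let ?a = "Fresh k (p @ [0])"
  have s: "{(N X, [N ?a, N X]), (N X, [])} = {(N X, [N ?a, N X])} \<union> {(N X, [])}" by auto
  have o: "occ {(N X, [N ?a, N X]), (N X, [])} Y A \<eta> j \<Longrightarrow> Y = ?a \<and> A = X \<and> \<eta> = [N ?a, N X] \<and> j = 0" for Y A \<eta> j
    unfolding s occ_Un occ_single by (auto simp: less_Suc_eq)
  have f2: "func {(N X, [N ?a, N X]), (N X, [])}" unfolding func_def using o by blast
  have d: False if "occ (flatten k ?a (p @ [0]) e) Y A \<eta> j" "occ {(N X, [N ?a, N X]), (N X, [])} Y A' \<eta>' j'" for Y A \<eta> j A' \<eta>' j'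
  proof -
    from 6 that(1) obtain q where "Y = Fresh k ((p @ [0]) @ q)" "q \<noteq> []" by blast
    with o[OF that(2)] show False by simp
  qed
  have "func (flatten k ?a (p @ [0]) e \<union> {(N X, [N ?a, N X]), (N X, [])})"
    by (rule func_Un[OF _ f2 d]) (use 6 in blast)
  then have "func (flatten k X p (Star e))" by simp
  moreover have "\<exists>q. Y = Fresh k (p @ q) \<and> q \<noteq> []" if "occ (flatten k X p (Star e)) Y A \<eta> j" for Y A \<eta> j
  proof -
    have "occ (flatten k ?a (p @ [0]) e) Y A \<eta> j \<or> occ {(N X, [N ?a, N X]), (N X, [])} Y A \<eta> j"
      using that by (simp only: flatten.simps occ_Un)
    then show ?thesis
    proof
      assume "occ (flatten k ?a (p @ [0]) e) Y A \<eta> j"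
      with 6 obtain q where "Y = Fresh k ((p @ [0]) @ q)" by blast
      then show ?thesis by (intro exI[of _ "0 # q"]) simp
    next
      assume "occ {(N X, [N ?a, N X]), (N X, [])} Y A \<eta> j"
      from o[OF this] show ?thesis by blast
    qed
  qed
  ultimately show ?case by blast
next
  case (7 k p j)
  then show ?case by simp
next
  case (8 k p j e es)
  let ?F = "(case atom e of Some _ \<Rightarrow> {} | None \<Rightarrow> flatten k (Fresh k (p @ [j])) (p @ [j]) e)"
  have fF: "func ?F" using 8 by (cases "atom e") auto
  have nF: "\<exists>q. Y = Fresh k (p @ j # q) \<and> q \<noteq> []" if "occ ?F Y A \<eta> i" for Y A \<eta> i
  proof (cases "atom e")
    case None
    with that have "occ (flatten k (Fresh k (p @ [j])) (p @ [j]) e) Y A \<eta> i" by simp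
    with 8(1)[OF None] obtain q where "Y = Fresh k ((p @ [j]) @ q)" "q \<noteq> []" by blast
    then show ?thesis by auto
  next
    case (Some a) with that show ?thesis by simp
  qed
  have d: False if "occ ?F Y A \<eta> i" "occ (flattenConc k p (Suc j) es) Y A' \<eta>' i'" for Y A \<eta> i A' \<eta>' i'
  proof -
    from nF[OF that(1)] obtain q where "Y = Fresh k (p @ j # q)" by blast
    moreover from 8 that(2) obtain i'' q' where "Suc j \<le> i''" "Y = Fresh k (p @ i'' # q')" by blast
    ultimately show False by simp
  qed
  have "func (?F \<union> flattenConc k p (Suc j) es)"
    by (rule func_Un[OF fF _ d]) (use 8 in blast)
  then have "func (flattenConc k p j (e # es))" by simp
  moreover have "\<exists>i' q. j \<le> i' \<and> Y = Fresh k (p @ i' # q) \<and> q \<noteq> []"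
    if "occ (flattenConc k p j (e # es)) Y A \<eta> i" for Y A \<eta> i
  proof -
    have "occ ?F Y A \<eta> i \<or> occ (flattenConc k p (Suc j) es) Y A \<eta> i" using that by simp
    then show ?thesis
    proof
      assume "occ ?F Y A \<eta> i" from nF[OF this] show ?thesis by blast
    next
      assume "occ (flattenConc k p (Suc j) es) Y A \<eta> i"
      with 8 obtain i'' q' where "Suc j \<le> i''" "Y = Fresh k (p @ i'' # q')" "q' \<noteq> []" by blast
      then show ?thesis by (intro exI[of _ i''] exI[of _ q']) simp
    qed
  qed
  ultimately show ?case by blast
next
  case (9 k X p j)
  then show ?case by simp
next
  case (10 k X p j e es)
  have d: False if "occ (flatten k X (p @ [j]) e) Y A \<eta> i" "occ (flattenAlt k X p (Suc j) es) Y A' \<eta>' i'" for Y A \<eta> i A' \<eta>' i'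
  proof -
    from 10 that(1) obtain q where "Y = Fresh k ((p @ [j]) @ q)" by blast
    moreover from 10 that(2) obtain i'' q' where "Suc j \<le> i''" "Y = Fresh k (p @ i'' # q')" by blast
    ultimately show False by simp
  qed
  have "func (flatten k X (p @ [j]) e \<union> flattenAlt k X p (Suc j) es)"
    by (rule func_Un[OF _ _ d]) (use 10 in blast)+
  then have "func (flattenAlt k X p j (e # es))" by simp
  moreover have "\<exists>i' q. j \<le> i' \<and> Y = Fresh k (p @ i' # q)"
    if "occ (flattenAlt k X p j (e # es)) Y A \<eta> i" for Y A \<eta> i
  proof -
    have "occ (flatten k X (p @ [j]) e) Y A \<eta> i \<or> occ (flattenAlt k X p (Suc j) es) Y A \<eta> i" using that by simp
    then show ?thesis
    proof
      assume "occ (flatten k X (p @ [j]) e) Y A \<eta> i"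
      with 10 obtain q where "Y = Fresh k ((p @ [j]) @ q)" by blast
      then show ?thesis by auto
    next
      assume "occ (flattenAlt k X p (Suc j) es) Y A \<eta> i"
      with 10 obtain i'' q' where "Suc j \<le> i''" "Y = Fresh k (p @ i'' # q')" by blast
      then show ?thesis by (intro exI[of _ i''] exI[of _ q']) simp
    qed
  qed
  ultimately show ?case by blast
qed



lemma syms_Un[simp]: "syms (P \<union> Q) = syms P \<union> syms Q"
  unfolding syms_def by blast
lemma syms_insert[simp]: "syms (insert (A, \<beta>) P) = insert A (set \<beta> \<union> syms P)"
  unfolding syms_def by blast
lemma syms_empty[simp]: "syms {} = {}"
  unfolding syms_def by blast

definition good :: "('t,'n) sym prods \<Rightarrow> 'n nt \<Rightarrow> bool" where
  "good P Y \<longleftrightarrow> \<not> isFresh Y \<or> (\<exists>A \<eta> j. occ P Y A \<eta> j \<and> sz A < sz Y)"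

lemma good_mono: "good P Y \<Longrightarrow> P \<subseteq> Q \<Longrightarrow> good Q Y"
  unfolding good_def using occ_mono by blast

lemma good_Un1: "good P Y \<Longrightarrow> good (P \<union> Q) Y" using good_mono by blast
lemma good_Un2: "good Q Y \<Longrightarrow> good (P \<union> Q) Y" using good_mono by blast

lemma flat_syms:
  fixes e :: "('t,'n) rexp" and es :: "('t,'n) rexp list"
  shows
  "sz X \<le> Suc (length p) \<Longrightarrow> \<forall>Y. N Y \<in> syms (flatten k X p e) \<longrightarrow> Y = X \<or> good (flatten k X p e) Y"
  "\<forall>Y. N Y \<in> syms (flattenConc k p j es) \<longrightarrow> good (flattenConc k p j es) Y
       \<or> (\<exists>i. i < length es \<and> atom (es!i) = None \<and> Y = Fresh k (p @ [j+i]))"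
  "sz X \<le> Suc (length p) \<Longrightarrow> \<forall>Y. N Y \<in> syms (flattenAlt k X p j es) \<longrightarrow> Y = X \<or> good (flattenAlt k X p j es) Y"
proof (induction k X p e and k p j es and k X p j es rule: flatten_flattenConc_flattenAlt.induct)
  case (1 k X p a)
  then show ?case by simp
next
  case (2 k X p n)
  then show ?case by (simp add: good_def)
next
  case (3 k X p es)
  let ?C = "{(N X, concSyms k p es)}"
  have c: "good ?C Y" if "N Y \<in> set (concSyms k p es)" for Y
  proof -
    from that obtain i where i: "i < length es" "concSyms k p es ! i = N Y"
      by (metis in_set_conv_nth length_concSyms)
    show ?thesis
    proof (cases "isFresh Y")
      case True
      from concSyms_fresh[OF i True] have Y: "Y = Fresh k (p @ [i])" by blast
      with 3(2) have "sz X < sz Y" by simp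
      then have "occ ?C Y X (concSyms k p es) i" using i True by (auto simp: occ_def)
      with \<open>sz X < sz Y\<close> show ?thesis unfolding good_def by blast
    qed (simp add: good_def)
  qed
  show ?case
  proof (intro allI impI)
    fix Y assume "N Y \<in> syms (flatten k X p (Conc es))"
    then have "N Y = N X \<or> N Y \<in> set (concSyms k p es) \<or> N Y \<in> syms (flattenConc k p 0 es)" by simp
    moreover have "flatten k X p (Conc es) = ?C \<union> flattenConc k p 0 es" by simp
    moreover
    { assume h: "N Y \<in> syms (flattenConc k p 0 es)"
      have "good (?C \<union> flattenConc k p 0 es) Y"
      proof -
        from 3(1) h have "good (flattenConc k p 0 es) Y \<or> (\<exists>i. i < length es \<and> atom (es!i) = None \<and> Y = Fresh k (p @ [i]))"
          by simp
        then show ?thesis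
        proof
          assume "good (flattenConc k p 0 es) Y" then show ?thesis by (rule good_Un2)
        next
          assume "\<exists>i. i < length es \<and> atom (es!i) = None \<and> Y = Fresh k (p @ [i])"
          then obtain i where "i < length es" "atom (es!i) = None" "Y = Fresh k (p @ [i])" by blast
          then have "N Y \<in> set (concSyms k p es)"
            by (metis in_set_conv_nth length_concSyms nth_concSyms option.simps(4))
          from c[OF this] show ?thesis by (rule good_Un1)
        qed
      qed }
    ultimately show "Y = X \<or> good (flatten k X p (Conc es)) Y"
      using c good_Un1 by (metis sym.inject(2))
  qed
next
  case (4 k X p es)
  then show ?case by simp
next
  case (5 k X p e)
  have "flatten k X p (Opt e) = flatten k X (p @ [0]) e \<union> {(N X, [])}" by simp
  have ih: "\<forall>Y. N Y \<in> syms (flatten k X (p @ [0]) e) \<longrightarrow> Y = X \<or> good (flatten k X (p @ [0]) e) Y"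
    using 5 by simp
  show ?case
  proof (intro allI impI)
    fix Y assume "N Y \<in> syms (flatten k X p (Opt e))"
    then have "N Y \<in> syms (flatten k X (p @ [0]) e) \<or> Y = X" by auto
    then show "Y = X \<or> good (flatten k X p (Opt e)) Y"
      using ih good_Un1 \<open>flatten k X p (Opt e) = _\<close> by metis
  qed
next
  case (6 k X p e)
  let ?a = "Fresh k (p @ [0])"
  let ?S = "{(N X, [N ?a, N X]), (N X, [])}"
  have eq: "flatten k X p (Star e) = flatten k ?a (p @ [0]) e \<union> ?S" by simp
  have ga: "good ?S ?a"
  proof -
    have "occ ?S ?a X [N ?a, N X] 0" by simp
    moreover have "sz X < sz ?a" using 6(2) by simp
    ultimately show ?thesis unfolding good_def by blast
  qed
  have ih: "\<forall>Y. N Y \<in> syms (flatten k ?a (p @ [0]) e) \<longrightarrow> Y = ?a \<or> good (flatten k ?a (p @ [0]) e) Y"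
    using 6(1) by simp
  show ?case
  proof (intro allI impI)
    fix Y assume "N Y \<in> syms (flatten k X p (Star e))"
    then have "N Y \<in> syms (flatten k ?a (p @ [0]) e) \<or> Y = ?a \<or> Y = X" by (auto simp add: eq)
    then show "Y = X \<or> good (flatten k X p (Star e)) Y"
      using ih ga good_Un1 good_Un2 eq by metis
  qed
next
  case (7 k p j)
  then show ?case by simp
next
  case (8 k p j e es)
  let ?F = "(case atom e of Some _ \<Rightarrow> {} | None \<Rightarrow> flatten k (Fresh k (p @ [j])) (p @ [j]) e)"
  have eq: "flattenConc k p j (e # es) = ?F \<union> flattenConc k p (Suc j) es" by simp
  show ?case
  proof (intro allI impI)
    fix Y assume "N Y \<in> syms (flattenConc k p j (e # es))"
    then have "N Y \<in> syms ?F \<or> N Y \<in> syms (flattenConc k p (Suc j) es)" by (simp only: eq syms_Un Un_iff)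
    then show "good (flattenConc k p j (e # es)) Y \<or>
          (\<exists>i<length (e # es). atom ((e # es) ! i) = None \<and> Y = Fresh k (p @ [j + i]))"
    proof
      assume h: "N Y \<in> syms ?F"
      show ?thesis
      proof (cases "atom e")
        case None
        with h have h': "N Y \<in> syms (flatten k (Fresh k (p @ [j])) (p @ [j]) e)" by simp
        from 8(1)[OF None] h' have "Y = Fresh k (p @ [j]) \<or> good (flatten k (Fresh k (p @ [j])) (p @ [j]) e) Y"
          by simp
        then show ?thesis
        proof
          assume "Y = Fresh k (p @ [j])"
          with None show ?thesis by (intro disjI2 exI[of _ 0]) simp
        next
          assume "good (flatten k (Fresh k (p @ [j])) (p @ [j]) e) Y"
          then have "good ?F Y" using None by simp
          then show ?thesis using eq good_Un1 by metis
        qed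
      next
        case (Some a) with h show ?thesis by simp
      qed
    next
      assume h: "N Y \<in> syms (flattenConc k p (Suc j) es)"
      from 8(2) h have "good (flattenConc k p (Suc j) es) Y \<or>
          (\<exists>i. i < length es \<and> atom (es ! i) = None \<and> Y = Fresh k (p @ [Suc j + i]))" by blast
      then show ?thesis
      proof
        assume "good (flattenConc k p (Suc j) es) Y"
        then show ?thesis using eq good_Un2 by metis
      next
        assume "\<exists>i. i < length es \<and> atom (es ! i) = None \<and> Y = Fresh k (p @ [Suc j + i])"
        then obtain i where "i < length es" "atom (es ! i) = None" "Y = Fresh k (p @ [Suc j + i])" by blast
        then show ?thesis by (intro disjI2 exI[of _ "Suc i"]) simp
      qed
    qed
  qed
next
  case (9 k X p j)
  then show ?case by simp
next
  case (10 k X p j e es)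
  have eq: "flattenAlt k X p j (e # es) = flatten k X (p @ [j]) e \<union> flattenAlt k X p (Suc j) es" by simp
  have a: "\<forall>Y. N Y \<in> syms (flatten k X (p @ [j]) e) \<longrightarrow> Y = X \<or> good (flatten k X (p @ [j]) e) Y"
    using 10 by simp
  have b: "\<forall>Y. N Y \<in> syms (flattenAlt k X p (Suc j) es) \<longrightarrow> Y = X \<or> good (flattenAlt k X p (Suc j) es) Y"
    using 10 by simp
  show ?case
  proof (intro allI impI)
    fix Y assume "N Y \<in> syms (flattenAlt k X p j (e # es))"
    then have "N Y \<in> syms (flatten k X (p @ [j]) e) \<or> N Y \<in> syms (flattenAlt k X p (Suc j) es)"
      by (simp only: eq syms_Un Un_iff)
    then show "Y = X \<or> good (flattenAlt k X p j (e # es)) Y"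
      using a b good_Un1 good_Un2 eq by metis
  qed
qed



locale cpsg =
  fixes G :: "('t,'n) sym prods" and Trig :: "'n nt set"
  assumes fG: "func G"
  and trigF: "\<forall>Y\<in>Trig. isFresh Y"
  and gG: "\<forall>Y. N Y \<in> syms G \<longrightarrow> good G Y"
begin

lemma call_inv: "cps_call G Trig c \<tau> \<Longrightarrow>
  (case c of ProdCall X \<eta> j \<Rightarrow> (N X, \<eta>) \<in> G \<and> j \<le> length \<eta> | SymCall Y \<Rightarrow> N Y \<in> syms G)"
proof (induction rule: cps_call.induct)
  case (trig_sym X \<eta> j \<tau> Y)
  then have "N Y \<in> set \<eta>" by (metis Suc_le_eq call.simps(6) nth_mem)
  with trig_sym show ?case unfolding syms_def by auto
qed (auto simp: syms_def)

lemma call_prodG: "cps_call G Trig (ProdCall X \<eta> j) \<tau> \<Longrightarrow> (N X, \<eta>) \<in> G \<and> j \<le> length \<eta>"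
  using call_inv by fastforce

inductive_cases symE: "cps_call G Trig (SymCall Y) \<tau>"
inductive_cases prodE: "cps_call G Trig (ProdCall X \<eta> j) \<tau>"

lemma call_unique: "cps_call G Trig c \<tau>1 \<Longrightarrow> cps_call G Trig c \<tau>2 \<Longrightarrow> \<tau>1 = \<tau>2"
proof (induction arbitrary: \<tau>2 rule: cps_call.induct)
  case (top Y)
  from top.prems show ?case
  proof (rule symE)
    show "[] = \<tau>2" if "\<tau>2 = []" using that by simp
  next
    fix X' \<eta>' j' assume "Y \<in> Trig" with top.hyps(2) show "[] = \<tau>2" by simp
  qed
next
  case (sym X \<tau> \<eta>)
  from sym.prems show ?case
  proof (rule prodE)
    assume "cps_call G Trig (SymCall X) \<tau>2" then show ?thesis by (rule sym.IH)
  qed simp_all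
next
  case (nontrig X \<eta> j \<tau>)
  from nontrig.prems show ?case
  proof (rule prodE)
    assume "j = length \<eta>" with nontrig.hyps(2) show ?thesis by simp
  next
    fix \<tau>' assume "\<tau>2 = hat (\<eta> ! j) # \<tau>'" "cps_call G Trig (ProdCall X \<eta> (Suc j)) \<tau>'"
    with nontrig.IH show ?thesis by simp
  next
    fix \<tau>' assume "\<eta> ! j = N X" "X \<in> Trig"
    with nontrig.hyps(3) show ?thesis by (simp add: trig_def)
  next
    fix \<tau>' Y assume "\<eta> ! j = N Y" "Y \<in> Trig"
    with nontrig.hyps(3) show ?thesis by (simp add: trig_def)
  qed
next
  case (selfloop X \<eta> j \<tau>)
  from selfloop.prems show ?case
  proof (rule prodE)
    assume "j = length \<eta>" with selfloop.hyps(2) show ?thesis by simp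
  next
    fix \<tau>' assume "\<not> trig Trig (\<eta> ! j)"
    with selfloop.hyps(3,4) show ?thesis by (simp add: trig_def)
  next
    fix \<tau>' assume "\<tau>2 = [Hat X]" then show ?thesis by simp
  next
    fix \<tau>' Y assume "\<eta> ! j = N Y" "Suc j = length \<eta> \<longrightarrow> Y \<noteq> X"
    with selfloop.hyps(2,3) show ?thesis by simp
  qed
next
  case (trig_sym X \<eta> j \<tau> Y)
  from trig_sym.prems show ?case
  proof (rule symE)
    assume "Y \<notin> Trig" with trig_sym.hyps(4) show ?thesis by simp
  next
    fix X' \<eta>' j'
    assume a: "cps_call G Trig (ProdCall X' \<eta>' (Suc j')) \<tau>2" "Suc j' \<le> length \<eta>'"
      "\<eta>' ! j' = N Y" "Y \<in> Trig" "Suc j' = length \<eta>' \<longrightarrow> Y \<noteq> X'"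
    have fr: "isFresh Y" using trigF a(4) by blast
    have "(N X, \<eta>) \<in> G" using call_prodG[OF trig_sym.hyps(1)] by blast
    then have o1: "occ G Y X \<eta> j" using trig_sym.hyps(2,3,5) fr
      unfolding occ_def by simp
    have "(N X', \<eta>') \<in> G" using call_prodG[OF a(1)] by blast
    then have o2: "occ G Y X' \<eta>' j'" using a(2,3,5) fr
      unfolding occ_def by simp
    from fG o1 o2 have "X = X' \<and> \<eta> = \<eta>' \<and> j = j'" unfolding func_def by blast
    with trig_sym.IH a(1) show ?thesis by simp
  qed
next
  case (trig_prod X \<eta> j \<tau> Y)
  from trig_prod.prems show ?case
  proof (rule prodE)
    assume "j = length \<eta>" with trig_prod.hyps(2) show ?thesis by simp
  next
    fix \<tau>' assume "\<not> trig Trig (\<eta> ! j)"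
    with trig_prod.hyps(3,4) show ?thesis by (simp add: trig_def)
  next
    fix \<tau>' assume "Suc j = length \<eta>" "\<eta> ! j = N X"
    with trig_prod.hyps(3,5) show ?thesis by simp
  next
    fix \<tau>' Y' assume "\<tau>2 = [Hat Y']" "\<eta> ! j = N Y'"
    with trig_prod.hyps(3) show ?thesis by simp
  qed
qed

lemma prod_exists: "cps_call G Trig (SymCall X) \<tau> \<Longrightarrow> (N X, \<eta>) \<in> G \<Longrightarrow> j \<le> length \<eta> \<Longrightarrow>
   \<exists>\<tau>'. cps_call G Trig (ProdCall X \<eta> j) \<tau>'"
proof (induction "length \<eta> - j" arbitrary: j)
  case 0
  then have "j = length \<eta>" by simp
  with 0 show ?case using cps_call.sym by blast
next
  case (Suc d)
  then have j: "Suc j \<le> length \<eta>" by simp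
  have "d = length \<eta> - Suc j" using Suc.hyps(2) by simp
  from Suc.hyps(1)[OF this] Suc.prems j obtain \<tau>' where c: "cps_call G Trig (ProdCall X \<eta> (Suc j)) \<tau>'"
    by auto
  show ?case
  proof (cases "trig Trig (\<eta> ! j)")
    case False
    with c j show ?thesis using cps_call.nontrig by blast
  next
    case True
    then obtain Y where Y: "\<eta> ! j = N Y" "Y \<in> Trig" unfolding trig_def by blast
    show ?thesis
    proof (cases "Suc j = length \<eta> \<and> Y = X")
      case True
      with c Y show ?thesis using cps_call.selfloop by blast
    next
      case False
      with c Y j show ?thesis using cps_call.trig_prod by blast
    qed
  qed
qed

lemma sym_exists: "N Y \<in> syms G \<Longrightarrow> \<exists>\<tau>. cps_call G Trig (SymCall Y) \<tau>"
proof (induction Y rule: measure_induct_rule[of sz])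
  case (less Y)
  show ?case
  proof (cases "Y \<in> Trig")
    case False
    with less.prems show ?thesis using cps_call.top by blast
  next
    case True
    with trigF have fr: "isFresh Y" by blast
    with gG less.prems obtain A \<eta> j where o: "occ G Y A \<eta> j" and s: "sz A < sz Y"
      unfolding good_def by blast
    from o have inG: "(N A, \<eta>) \<in> G" and j: "Suc j \<le> length \<eta>" and e: "\<eta> ! j = N Y"
      and ns: "\<not> (Suc j = length \<eta> \<and> Y = A)"
      unfolding occ_def by auto
    have "N A \<in> syms G" using inG unfolding syms_def by blast
    from less.IH[OF s this] obtain \<tau>A where "cps_call G Trig (SymCall A) \<tau>A" by blast
    from prod_exists[OF this inG j] obtain \<tau>' where "cps_call G Trig (ProdCall A \<eta> (Suc j)) \<tau>'" by blast
    with j e True ns show ?thesis using cps_call.trig_sym by blast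
  qed
qed

lemma tauSym_eq: "cps_call G Trig (SymCall Y) \<tau> \<Longrightarrow> tauSym G Trig (N Y) = \<tau>"
  unfolding tauSym_def using call_unique by (simp add: the_equality)

lemma tauProd_eq: "cps_call G Trig (ProdCall X \<eta> j) \<tau> \<Longrightarrow> tauProd G Trig X \<eta> j = \<tau>"
  unfolding tauProd_def using call_unique by (simp add: the_equality)

lemma tauProd_call: "(N X, \<eta>) \<in> G \<Longrightarrow> j \<le> length \<eta> \<Longrightarrow> cps_call G Trig (ProdCall X \<eta> j) (tauProd G Trig X \<eta> j)"
proof -
  assume a: "(N X, \<eta>) \<in> G" "j \<le> length \<eta>"
  then have "N X \<in> syms G" unfolding syms_def by blast
  from sym_exists[OF this] obtain \<tau> where "cps_call G Trig (SymCall X) \<tau>" by blast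
  from prod_exists[OF this a] obtain \<tau>' where "cps_call G Trig (ProdCall X \<eta> j) \<tau>'" by blast
  with tauProd_eq show ?thesis by simp
qed

end



context cpsg begin

abbreviation "C \<equiv> cpsGrammar G Trig"

lemma tS_T[simp]: "tauSym G Trig (T a) = []" by (simp add: tauSym_def)

lemma tS_nontrig: "s \<in> syms G \<Longrightarrow> \<not> trig Trig s \<Longrightarrow> tauSym G Trig s = []"
proof (cases s)
  case (N Y)
  assume a: "s \<in> syms G" "\<not> trig Trig s"
  then have "Y \<notin> Trig" using N by (auto simp: trig_def)
  with a N have "cps_call G Trig (SymCall Y) []" using cps_call.top by blast
  with N show ?thesis using tauSym_eq by simp
qed simp

lemma tP_last: "(N X, \<eta>) \<in> G \<Longrightarrow> tauProd G Trig X \<eta> (length \<eta>) = tauSym G Trig (N X)"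
proof -
  assume a: "(N X, \<eta>) \<in> G"
  then have "N X \<in> syms G" unfolding syms_def by blast
  from sym_exists[OF this] obtain \<tau> where c: "cps_call G Trig (SymCall X) \<tau>" by blast
  from cps_call.sym[OF c a] have "cps_call G Trig (ProdCall X \<eta> (length \<eta>)) \<tau>" .
  with c show ?thesis using tauProd_eq tauSym_eq by simp
qed

lemma tP_nontrig: "(N X, \<eta>) \<in> G \<Longrightarrow> Suc j \<le> length \<eta> \<Longrightarrow> \<not> trig Trig (\<eta> ! j) \<Longrightarrow>
   tauProd G Trig X \<eta> j = hat (\<eta> ! j) # tauProd G Trig X \<eta> (Suc j)"
  using tauProd_call[of X \<eta> "Suc j"] cps_call.nontrig tauProd_eq by blast

lemma tP_self: "(N X, \<eta>) \<in> G \<Longrightarrow> Suc j = length \<eta> \<Longrightarrow> \<eta> ! j = N X \<Longrightarrow> X \<in> Trig \<Longrightarrow>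
   tauProd G Trig X \<eta> j = [Hat X]"
proof -
  assume a: "(N X, \<eta>) \<in> G" "Suc j = length \<eta>" "\<eta> ! j = N X" "X \<in> Trig"
  have c: "cps_call G Trig (ProdCall X \<eta> (Suc j)) (tauProd G Trig X \<eta> (Suc j))"
    using tauProd_call a by simp
  from cps_call.selfloop[OF c a(2-4)] show ?thesis using tauProd_eq by simp
qed

lemma tP_trig: "(N X, \<eta>) \<in> G \<Longrightarrow> Suc j \<le> length \<eta> \<Longrightarrow> \<eta> ! j = N Y \<Longrightarrow> Y \<in> Trig \<Longrightarrow>
   \<not> (Suc j = length \<eta> \<and> Y = X) \<Longrightarrow>
   tauProd G Trig X \<eta> j = [Hat Y] \<and> tauSym G Trig (N Y) = tauProd G Trig X \<eta> (Suc j)"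
proof -
  assume a: "(N X, \<eta>) \<in> G" "Suc j \<le> length \<eta>" "\<eta> ! j = N Y" "Y \<in> Trig" "\<not> (Suc j = length \<eta> \<and> Y = X)"
  have c: "cps_call G Trig (ProdCall X \<eta> (Suc j)) (tauProd G Trig X \<eta> (Suc j))"
    using tauProd_call a by simp
  from cps_call.trig_prod[OF c a(2-5)] cps_call.trig_sym[OF c a(2-5)] show ?thesis
    using tauProd_eq tauSym_eq by simp
qed

lemma cpsProd: "(N X, \<eta>) \<in> G \<Longrightarrow> (Hat X, tauProd G Trig X \<eta> 0) \<in> C"
  unfolding cpsGrammar_def using tauProd_call[of X \<eta> 0] by blast

lemma step_single_C: "(A, \<beta>) \<in> P \<Longrightarrow> step P [A] \<beta>"
  unfolding step_def by (metis append.right_neutral append_Nil)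

lemma main:
  assumes nT: "\<forall>a \<beta>. (T a, \<beta>) \<notin> G"
  shows "(\<forall>X\<in>syms G. \<forall>w. derivesN G n [X] (map T w) \<longrightarrow>
            derivesN C n [hat X] (map CT w @ tauSym G Trig X))
       \<and> (\<forall>X \<eta> j w. (N X, \<eta>) \<in> G \<longrightarrow> j \<le> length \<eta> \<longrightarrow> derivesN G n (drop j \<eta>) (map T w) \<longrightarrow>
            derivesN C n (tauProd G Trig X \<eta> j) (map CT w @ tauSym G Trig (N X)))"
proof (induction n rule: less_induct)
  case (less n)
  have P1: "derivesN C n [hat X] (map CT w @ tauSym G Trig X)"
    if X: "X \<in> syms G" and d: "derivesN G n [X] (map T w)" for X w
  proof (cases X)
    case (T a)
    from dN_noLHS[of "T a" G n "map T w"] nT d T have "n = 0" "map T w = [T a]" by auto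
    then show ?thesis using T by auto
  next
    case (N Y)
    show ?thesis
    proof (cases n)
      case 0 with d N show ?thesis by (cases w) auto
    next
      case (Suc m)
      with d obtain x where s: "step G [N Y] x" and dm: "derivesN G m x (map T w)"
        using N by (auto simp: dNSuc)
      from step_single[OF s] have inG: "(N Y, x) \<in> G" .
      have "m < n" using Suc by simp
      from conjunct2[OF less.IH[OF this]] have H: "\<forall>X \<eta> j w. (N X, \<eta>) \<in> G \<longrightarrow> j \<le> length \<eta> \<longrightarrow> derivesN G m (drop j \<eta>) (map T w) \<longrightarrow>
            derivesN C m (tauProd G Trig X \<eta> j) (map CT w @ tauSym G Trig (N X))" .
      have "derivesN C m (tauProd G Trig Y x 0) (map CT w @ tauSym G Trig (N Y))"
        using H[rule_format, of Y x 0 w] inG dm by simp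
      moreover have "step C [Hat Y] (tauProd G Trig Y x 0)" using cpsProd[OF inG] by (rule step_single_C)
      ultimately show ?thesis using N Suc by (auto simp: dNSuc)
    qed
  qed
  have P1': "derivesN C m [hat X] (map CT w @ tauSym G Trig X)"
    if "m \<le> n" "X \<in> syms G" "derivesN G m [X] (map T w)" for m X w
  proof (cases "m = n")
    case True with that P1 show ?thesis by simp
  next
    case False
    with that have "m < n" by simp
    from conjunct1[OF less.IH[OF this]] that(2,3) show ?thesis by blast
  qed
  have P2: "derivesN C m (tauProd G Trig X \<eta> j) (map CT w @ tauSym G Trig (N X))"
    if inG: "(N X, \<eta>) \<in> G" and "length \<eta> - j = d" "j \<le> length \<eta>" "m \<le> n"
      "derivesN G m (drop j \<eta>) (map T w)" for X \<eta> j w m d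
    using that(2-)
  proof (induction d arbitrary: j w m)
    case 0
    then have j: "j = length \<eta>" by simp
    with 0 have "derivesN G m [] (map T w)" by simp
    then have "m = 0 \<and> map T w = []" using dN_Nil[of G m "map T w"] by simp
    then show ?case using j tP_last[OF inG] by simp
  next
    case (Suc d)
    then have j: "Suc j \<le> length \<eta>" by simp
    have dS: "length \<eta> - Suc j = d" using Suc.prems by simp
    have "drop j \<eta> = [\<eta> ! j] @ drop (Suc j) \<eta>" using j by (simp add: Cons_nth_drop_Suc)
    with Suc.prems(4) have "derivesN G m ([\<eta> ! j] @ drop (Suc j) \<eta>) (map T w)" by simp
    from dN_split[OF this] obtain m1 m2 z1 z2 where mm: "m = m1 + m2" and z: "map T w = z1 @ z2"
      and d1: "derivesN G m1 [\<eta> ! j] z1" and d2: "derivesN G m2 (drop (Suc j) \<eta>) z2" by blast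
    from z obtain w1 w2 where w: "w = w1 @ w2" "z1 = map T w1" "z2 = map T w2"
      by (auto simp: map_eq_append_conv)
    have "\<eta> ! j \<in> set \<eta>" using j by simp
    then have sG: "\<eta> ! j \<in> syms G" using inG unfolding syms_def by blast
    have D1: "derivesN C m1 [hat (\<eta> ! j)] (map CT w1 @ tauSym G Trig (\<eta> ! j))"
    proof -
      have "m1 \<le> n" using mm Suc.prems(3) by simp
      from P1'[OF this sG] d1 w show ?thesis by simp
    qed
    have D2: "derivesN C m2 (tauProd G Trig X \<eta> (Suc j)) (map CT w2 @ tauSym G Trig (N X))"
    proof -
      have "m2 \<le> n" using mm Suc.prems(3) by simp
      from Suc.IH[OF dS j this] d2 w show ?thesis by simp
    qed
    show ?case
    proof (cases "trig Trig (\<eta> ! j)")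
      case False
      have "derivesN C (m1 + m2) ([hat (\<eta> ! j)] @ tauProd G Trig X \<eta> (Suc j))
              ((map CT w1 @ tauSym G Trig (\<eta> ! j)) @ (map CT w2 @ tauSym G Trig (N X)))"
        by (rule dN_append[OF D1 D2])
      then show ?thesis using tP_nontrig[OF inG j False] tS_nontrig[OF sG False] mm w by simp
    next
      case True
      then obtain Y where Y: "\<eta> ! j = N Y" "Y \<in> Trig" unfolding trig_def by blast
      show ?thesis
      proof (cases "Suc j = length \<eta> \<and> Y = X")
        case True
        then have "drop (Suc j) \<eta> = []" by simp
        with d2 have "derivesN G m2 [] z2" by simp
        then have "m2 = 0 \<and> z2 = []" using dN_Nil by metis
        then have "m2 = 0" "w2 = []" using w by auto
        then show ?thesis using D1 tP_self[OF inG _ _ ] True Y mm w by simp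
      next
        case False
        from tP_trig[OF inG j Y False] have e: "tauProd G Trig X \<eta> j = [Hat Y]"
          "tauSym G Trig (N Y) = tauProd G Trig X \<eta> (Suc j)" by auto
        from D1 have D1': "derivesN C m1 [Hat Y] (map CT w1 @ tauProd G Trig X \<eta> (Suc j))"
          using Y e by simp
        from dN_ctx[OF D2, of "map CT w1" "[]"] have
          "derivesN C m2 (map CT w1 @ tauProd G Trig X \<eta> (Suc j)) (map CT w1 @ map CT w2 @ tauSym G Trig (N X))"
          by simp
        from dN_trans[OF D1' this] show ?thesis using e mm w by simp
      qed
    qed
  qed
  show ?case
  proof (intro conjI allI ballI impI)
    fix X w assume "X \<in> syms G" "derivesN G n [X] (map T w)"
    then show "derivesN C n [hat X] (map CT w @ tauSym G Trig X)" by (rule P1)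
  next
    fix X \<eta> j w assume "(N X, \<eta>) \<in> G" "j \<le> length \<eta>" "derivesN G n (drop j \<eta>) (map T w)"
    then show "derivesN C n (tauProd G Trig X \<eta> j) (map CT w @ tauSym G Trig (N X))"
      using P2 by blast
  qed
qed

end



lemma flat_lhs:
  fixes e :: "('t,'n) rexp" and es :: "('t,'n) rexp list"
  shows
  "\<forall>A \<beta>. (A, \<beta>) \<in> flatten k X p e \<longrightarrow> (\<exists>Y. A = N Y)"
  "\<forall>A \<beta>. (A, \<beta>) \<in> flattenConc k p j es \<longrightarrow> (\<exists>Y. A = N Y)"
  "\<forall>A \<beta>. (A, \<beta>) \<in> flattenAlt k X p j es \<longrightarrow> (\<exists>Y. A = N Y)"
  by (induction k X p e and k p j es and k X p j es rule: flatten_flattenConc_flattenAlt.induct)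
     (auto split: option.splits)

lemma occ_UN: "occ (\<Union>i\<in>I. P i) Y A \<eta> j \<longleftrightarrow> (\<exists>i\<in>I. occ (P i) Y A \<eta> j)"
  unfolding occ_def by blast

lemma syms_UN: "syms (\<Union>i\<in>I. P i) = (\<Union>i\<in>I. syms (P i))"
  unfolding syms_def by blast

theorem mainTheorem1:
  fixes rules :: "('t, 'n) bnf_grammar" and Trig :: "'n nt set"
  defines "G \<equiv> flattenGrammar rules"
  assumes "\<forall>Y\<in>Trig. cps_eligible G Y"
  shows "(\<forall>X \<in> syms G. \<forall>w n. derivesN G n [X] (map T w) \<longrightarrow>
            derivesN (cpsGrammar G Trig) n [hat X] (map CT w @ tauSym G Trig X))
       \<and> (\<forall>X \<eta> j w n. (N X, \<eta>) \<in> G \<longrightarrow> j \<le> length \<eta> \<longrightarrow> derivesN G n (drop j \<eta>) (map T w) \<longrightarrow>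
            derivesN (cpsGrammar G Trig) n (tauProd G Trig X \<eta> j) (map CT w @ tauSym G Trig (N X)))"
proof -
  define F where "F k = flatten k (Top (fst (rules ! k))) [] (snd (rules ! k))" for k
  have GF: "G = (\<Union>k\<in>{..<length rules}. F k)"
    unfolding G_def flattenGrammar_def F_def by simp
  have fG: "func G"
    unfolding func_def
  proof (intro allI impI)
    fix Y A \<eta> j A' \<eta>' j'
    assume o1: "occ G Y A \<eta> j" and o2: "occ G Y A' \<eta>' j'"
    from o1 obtain k where k: "occ (F k) Y A \<eta> j" unfolding GF occ_UN by blast
    from o2 obtain k' where k': "occ (F k') Y A' \<eta>' j'" unfolding GF occ_UN by blast
    from conjunct2[OF flat_func(1)] k obtain q where "Y = Fresh k q" unfolding F_def by blast
    moreover from conjunct2[OF flat_func(1)] k' obtain q' where "Y = Fresh k' q'" unfolding F_def by blast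
    ultimately have "k = k'" by simp
    with k k' conjunct1[OF flat_func(1)] show "A = A' \<and> \<eta> = \<eta>' \<and> j = j'"
      unfolding F_def func_def by blast
  qed
  have tF: "\<forall>Y\<in>Trig. isFresh Y"
    using assms(2) unfolding cps_eligible_def by auto
  have gG: "\<forall>Y. N Y \<in> syms G \<longrightarrow> good G Y"
  proof (intro allI impI)
    fix Y assume "N Y \<in> syms G"
    then obtain k where kk: "k < length rules" and s: "N Y \<in> syms (F k)" unfolding GF syms_UN by blast
    have "sz (Top (fst (rules ! k))) \<le> Suc (length ([]::nat list))" by simp
    from flat_syms(1)[OF this] s have "Y = Top (fst (rules ! k)) \<or> good (F k) Y"
      unfolding F_def by blast
    then show "good G Y"
    proof
      assume "Y = Top (fst (rules ! k))" then show ?thesis by (simp add: good_def)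
    next
      assume "good (F k) Y"
      moreover have "F k \<subseteq> G" unfolding GF using kk by blast
      ultimately show ?thesis by (rule good_mono)
    qed
  qed
  interpret cpsg G Trig using fG tF gG by unfold_locales
  have nT: "\<forall>a \<beta>. (T a, \<beta>) \<notin> G"
  proof (intro allI notI)
    fix a \<beta> assume "(T a, \<beta>) \<in> G"
    then obtain k where "(T a, \<beta>) \<in> F k" unfolding GF by blast
    with flat_lhs(1) show False unfolding F_def by blast
  qed
  from main[OF nT] show ?thesis by blast
qed

end
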